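(* Let $G$ be a torsion abelian group, $S=\bigoplus_{i\in G}S_i$ a $G$-graded ring and $R=\bigoplus_{i\in G}R_i$ a graded subring of $S$ (so $R_i=R\cap S_i$). Suppose (i) $S=R[v]$ is a polynomial ring in one variable over $R$ for some homogeneous element $v$ of $S$, and (ii) $H=\{i\in G: R_i\neq0\}$ is a subgroup of $G$. Then at least one of the following holds: (a) $S_0$ is a polynomial ring in one variable over $R_0$; (b) there exists $e\in H\setminus\{0\}$ such that, if $k>0$ denotes the order of $e$ in $H$, then for every $r\in R_e\setminus\{0\}$ the localization $(S_0)_{r^k}$ is a polynomial ring in one variable.
   Context: A ring $C$ is a polynomial ring in one variable if there is a subring $A\subseteq C$ such that $C$ is a polynomial ring in one variable over $A$ (the zero ring counts). *)

theory Defs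
  imports Main "HOL-Algebra.Polynomials"
begin

definition nsm :: "nat \<Rightarrow> 'g::ab_group_add \<Rightarrow> 'g" where
  "nsm n g = ((+) g ^^ n) 0"

definition gorder :: "'g::ab_group_add \<Rightarrow> nat" where
  "gorder e = (LEAST k. 0 < k \<and> nsm k e = 0)"

(* gr i = S_i; the ambient ring S is the whole type 'a *)
definition graded_ring :: "('g::ab_group_add \<Rightarrow> 'a::comm_ring_1 set) \<Rightarrow> bool" where
  "graded_ring gr \<longleftrightarrow>
     (\<forall>i. 0 \<in> gr i \<and> (\<forall>x\<in>gr i. \<forall>y\<in>gr i. x + y \<in> gr i \<and> - x \<in> gr i)) \<and>
     (\<forall>i j. \<forall>x\<in>gr i. \<forall>y\<in>gr j. x * y \<in> gr (i + j)) \<and>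
     (\<forall>s. \<exists>!c. finite {i. c i \<noteq> 0} \<and> (\<forall>i. c i \<in> gr i) \<and> s = (\<Sum>i\<in>{i. c i \<noteq> 0}. c i))"

definition subring_set :: "'a::comm_ring_1 set \<Rightarrow> bool" where
  "subring_set R \<longleftrightarrow> 0 \<in> R \<and> 1 \<in> R \<and>
     (\<forall>x\<in>R. \<forall>y\<in>R. x + y \<in> R \<and> - x \<in> R \<and> x * y \<in> R)"

definition graded_subring :: "('g::ab_group_add \<Rightarrow> 'a::comm_ring_1 set) \<Rightarrow> 'a set \<Rightarrow> bool" where
  "graded_subring gr R \<longleftrightarrow> subring_set R \<and>
     (\<forall>r\<in>R. \<exists>c. finite {i. c i \<noteq> 0} \<and> (\<forall>i. c i \<in> R \<inter> gr i) \<and> r = (\<Sum>i\<in>{i. c i \<noteq> 0}. c i))"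

definition sring :: "'a::comm_ring_1 set \<Rightarrow> 'a ring" where
  "sring A = \<lparr>carrier = A, mult = (*), one = 1, zero = 0, add = (+)\<rparr>"

definition poly_ring_over :: "('c, 'm) ring_scheme \<Rightarrow> 'c set \<Rightarrow> 'c \<Rightarrow> bool" where
  "poly_ring_over C A x \<longleftrightarrow> cring C \<and> subring A C \<and> x \<in> carrier C \<and>
     (\<forall>c\<in>carrier C. \<exists>p. set p \<subseteq> A \<and> c = ring.eval C p x) \<and>
     (\<forall>p. set p \<subseteq> A \<and> ring.eval C p x = \<zero>\<^bsub>C\<^esub> \<longrightarrow> (\<forall>a\<in>set p. a = \<zero>\<^bsub>C\<^esub>))"

(* C is a polynomial ring in one variable (over some subring; the zero ring counts) *)
definition is_poly_ring1 :: "('c, 'm) ring_scheme \<Rightarrow> bool" where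
  "is_poly_ring1 C \<longleftrightarrow> (\<exists>A x. poly_ring_over C A x)"

(* Localization A_f of a subring A (of the ambient ring) at f \<in> A:
   elements are classes of pairs (s,n), s \<in> A, standing for s / f^n *)
definition loc_rel :: "'a::comm_ring_1 \<Rightarrow> 'a \<times> nat \<Rightarrow> 'a \<times> nat \<Rightarrow> bool" where
  "loc_rel f p q \<longleftrightarrow> (\<exists>l. f ^ l * (fst p * f ^ snd q - fst q * f ^ snd p) = 0)"

definition loc_cls :: "'a::comm_ring_1 set \<Rightarrow> 'a \<Rightarrow> 'a \<Rightarrow> nat \<Rightarrow> ('a \<times> nat) set" where
  "loc_cls A f s n = {q. fst q \<in> A \<and> loc_rel f (s, n) q}"

definition loc_rep :: "('a \<times> nat) set \<Rightarrow> 'a \<times> nat" where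
  "loc_rep Q = (SOME p. p \<in> Q)"

definition Loc :: "'a::comm_ring_1 set \<Rightarrow> 'a \<Rightarrow> ('a \<times> nat) set ring" where
  "Loc A f = \<lparr>carrier = {loc_cls A f s n | s n. s \<in> A},
     mult = (\<lambda>Q Y. loc_cls A f (fst (loc_rep Q) * fst (loc_rep Y))
                       (snd (loc_rep Q) + snd (loc_rep Y))),
     one = loc_cls A f 1 0,
     zero = loc_cls A f 0 0,
     add = (\<lambda>Q Y. loc_cls A f (fst (loc_rep Q) * f ^ snd (loc_rep Y) + fst (loc_rep Y) * f ^ snd (loc_rep Q))
                       (snd (loc_rep Q) + snd (loc_rep Y)))\<rparr>"

end

theory Submission
  imports Defs
begin

lemma sring_simps[simp]: "carrier (sring A) = A" "mult (sring A) = (*)" "one (sring A) = 1"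
  "zero (sring A) = 0" "add (sring A) = (+)"
  by (simp_all add: sring_def)

lemma cring_sring: assumes "subring_set A" shows "cring (sring A)"
proof (rule cringI)
  show "abelian_group (sring A)"
    apply (rule abelian_groupI)
    using assms unfolding subring_set_def
    by (auto simp: add.assoc add.commute intro!: bexI[of _ "- x" for x])
  show "comm_monoid (sring A)"
    apply (rule comm_monoidI)
    using assms unfolding subring_set_def by (auto simp: mult.assoc mult.commute)
qed (simp add: distrib_right)

lemma sring_pow: "x [^]\<^bsub>sring A\<^esub> (n::nat) = x ^ n"
  by (induct n) (simp_all add: mult.commute)

lemma sring_minus: assumes "subring_set A" "x \<in> A" shows "\<ominus>\<^bsub>sring A\<^esub> x = - x"
proof -
  interpret cring "sring A" by (rule cring_sring[OF assms(1)])
  show ?thesis using assms unfolding subring_set_def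
    by (intro add.inv_equality) auto
qed

fun ev :: "'a::comm_ring_1 list \<Rightarrow> 'a \<Rightarrow> 'a" where
  "ev [] x = 0"
| "ev (a # p) x = a * x ^ length p + ev p x"

lemma eval_sring: assumes "subring_set A" shows "ring.eval (sring A) p x = ev p x"
proof -
  interpret cring "sring A" by (rule cring_sring[OF assms(1)])
  show ?thesis by (induct p) (simp_all add: sring_pow)
qed

lemma ev_sum: "ev p x = (\<Sum>i<length p. rev p ! i * x ^ i)"
proof (induct p)
  case (Cons a p)
  have "(\<Sum>i<length (a#p). rev (a#p) ! i * x ^ i) = (\<Sum>i<length p. rev (a#p) ! i * x ^ i) + a * x ^ length p"
    by (simp add: nth_append)
  also have "(\<Sum>i<length p. rev (a#p) ! i * x ^ i) = (\<Sum>i<length p. rev p ! i * x ^ i)"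
    by (intro sum.cong) (auto simp: nth_append)
  finally show ?case using Cons by simp
qed simp

lemma ev_map_mult: "ev (map (\<lambda>t. t * c) p) x = ev p x * c"
  by (induct p) (simp_all add: algebra_simps)

lemma ev_list: "ev (rev (map a [0..<N])) x = (\<Sum>i<N. a i * x ^ i)"
  unfolding ev_sum by (intro sum.cong) (auto simp: rev_map)

lemma loc_rel_refl: "loc_rel f p p"
  unfolding loc_rel_def by (rule exI[of _ 0]) simp

lemma loc_rel_sym: "loc_rel f p q \<Longrightarrow> loc_rel f q p"
  unfolding loc_rel_def by (metis minus_diff_eq mult_minus_right neg_equal_0_iff_equal)

lemma loc_rel_trans: assumes "loc_rel f (s,n) (t,p)" "loc_rel f (t,p) (u,q)"
  shows "loc_rel f (s,n) (u,q)"
proof -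
  obtain a b where a: "f^a * (s * f^p - t * f^n) = 0" and b: "f^b * (t * f^q - u * f^p) = 0"
    using assms unfolding loc_rel_def by auto
  have "f^(a+b+p) * (s * f^q - u * f^n) = f^b * f^q * (f^a * (s * f^p - t * f^n)) + f^a * f^n * (f^b * (t * f^q - u * f^p))"
    by (simp add: power_add algebra_simps)
  also have "\<dots> = 0" using a b by simp
  finally show ?thesis unfolding loc_rel_def by auto
qed

lemma loc_rel_add: assumes "loc_rel f (s,n) (s',n')" "loc_rel f (t,p) (t',p')"
  shows "loc_rel f (s * f^p + t * f^n, n+p) (s' * f^p' + t' * f^n', n'+p')"
proof -
  obtain a b where a: "f^a * (s * f^n' - s' * f^n) = 0" and b: "f^b * (t * f^p' - t' * f^p) = 0"
    using assms unfolding loc_rel_def by auto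
  have "f^(a+b) * ((s * f^p + t * f^n) * f^(n'+p') - (s' * f^p' + t' * f^n') * f^(n+p))
      = f^b * f^p * f^p' * (f^a * (s * f^n' - s' * f^n)) + f^a * f^n * f^n' * (f^b * (t * f^p' - t' * f^p))"
    by (simp add: power_add algebra_simps)
  also have "\<dots> = 0" using a b by simp
  finally show ?thesis unfolding loc_rel_def by auto
qed

lemma loc_rel_mult: assumes "loc_rel f (s,n) (s',n')" "loc_rel f (t,p) (t',p')"
  shows "loc_rel f (s * t, n+p) (s' * t', n'+p')"
proof -
  obtain a b where a: "f^a * (s * f^n' - s' * f^n) = 0" and b: "f^b * (t * f^p' - t' * f^p) = 0"
    using assms unfolding loc_rel_def by auto
  have "f^(a+b) * ((s * t) * f^(n'+p') - (s' * t') * f^(n+p))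
      = f^b * t * f^p' * (f^a * (s * f^n' - s' * f^n)) + f^a * s' * f^n * (f^b * (t * f^p' - t' * f^p))"
    by (simp add: power_add algebra_simps)
  also have "\<dots> = 0" using a b by simp
  finally show ?thesis unfolding loc_rel_def by auto
qed

lemma loc_rel_eqI: "s * f^p = t * f^n \<Longrightarrow> loc_rel f (s,n) (t,p)"
  unfolding loc_rel_def by (rule exI[of _ 0]) simp

locale locs =
  fixes A :: "'a::comm_ring_1 set" and f :: 'a
  assumes sub: "subring_set A" and fA: "f \<in> A"
begin

abbreviation "cls \<equiv> loc_cls A f"

lemma A_closed: "0 \<in> A" "1 \<in> A" "x \<in> A \<Longrightarrow> y \<in> A \<Longrightarrow> x + y \<in> A"
  "x \<in> A \<Longrightarrow> - x \<in> A" "x \<in> A \<Longrightarrow> y \<in> A \<Longrightarrow> x * y \<in> A"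
  using sub unfolding subring_set_def by auto

lemma A_pow: "x \<in> A \<Longrightarrow> x ^ n \<in> A"
  by (induct n) (auto intro: A_closed)

lemma A_diff: "x \<in> A \<Longrightarrow> y \<in> A \<Longrightarrow> x - y \<in> A"
  by (metis A_closed(3,4) diff_conv_add_uminus)

lemma cls_mem: "s \<in> A \<Longrightarrow> (s,n) \<in> cls s n"
  unfolding loc_cls_def by (auto intro: loc_rel_refl)

lemma cls_eq_iff: assumes "s \<in> A" "t \<in> A"
  shows "cls s n = cls t p \<longleftrightarrow> loc_rel f (s,n) (t,p)"
proof
  assume "cls s n = cls t p"
  then have "(t,p) \<in> cls s n" using cls_mem[OF assms(2)] by simp
  then show "loc_rel f (s,n) (t,p)" unfolding loc_cls_def by simp
next
  assume r: "loc_rel f (s,n) (t,p)"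
  show "cls s n = cls t p"
    unfolding loc_cls_def using r loc_rel_sym[OF r]
    by (auto intro: loc_rel_trans)
qed

lemma cls_eqI: "s \<in> A \<Longrightarrow> t \<in> A \<Longrightarrow> s * f^p = t * f^n \<Longrightarrow> cls s n = cls t p"
  using cls_eq_iff loc_rel_eqI by blast

lemma rep: assumes "s \<in> A"
  shows "fst (loc_rep (cls s n)) \<in> A" "loc_rel f (s,n) (loc_rep (cls s n))"
proof -
  have "loc_rep (cls s n) \<in> cls s n" unfolding loc_rep_def
    using cls_mem[OF assms] by (rule someI)
  then show "fst (loc_rep (cls s n)) \<in> A" "loc_rel f (s,n) (loc_rep (cls s n))"
    unfolding loc_cls_def by auto
qed

lemma add_cls: assumes "s \<in> A" "t \<in> A"
  shows "cls s n \<oplus>\<^bsub>Loc A f\<^esub> cls t p = cls (s * f^p + t * f^n) (n+p)"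
proof -
  obtain s' n' where 1: "loc_rep (cls s n) = (s',n')" by fastforce
  obtain t' p' where 2: "loc_rep (cls t p) = (t',p')" by fastforce
  have s': "s' \<in> A" "loc_rel f (s,n) (s',n')" using rep[OF assms(1), of n] 1 by auto
  have t': "t' \<in> A" "loc_rel f (t,p) (t',p')" using rep[OF assms(2), of p] 2 by auto
  show ?thesis unfolding Loc_def using 1 2 apply simp
    apply (subst cls_eq_iff)
    using s' t' assms fA by (auto intro!: A_closed A_pow intro: loc_rel_sym[OF loc_rel_add])
qed

lemma mult_cls: assumes "s \<in> A" "t \<in> A"
  shows "cls s n \<otimes>\<^bsub>Loc A f\<^esub> cls t p = cls (s * t) (n+p)"
proof -
  obtain s' n' where 1: "loc_rep (cls s n) = (s',n')" by fastforce
  obtain t' p' where 2: "loc_rep (cls t p) = (t',p')" by fastforce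
  have s': "s' \<in> A" "loc_rel f (s,n) (s',n')" using rep[OF assms(1), of n] 1 by auto
  have t': "t' \<in> A" "loc_rel f (t,p) (t',p')" using rep[OF assms(2), of p] 2 by auto
  show ?thesis unfolding Loc_def using 1 2 apply simp
    apply (subst cls_eq_iff)
    using s' t' assms fA by (auto intro!: A_closed A_pow intro: loc_rel_sym[OF loc_rel_mult])
qed

lemma Loc_simps: "carrier (Loc A f) = {cls s n | s n. s \<in> A}"
  "\<one>\<^bsub>Loc A f\<^esub> = cls 1 0" "\<zero>\<^bsub>Loc A f\<^esub> = cls 0 0"
  by (simp_all add: Loc_def)

lemma cls_in: "s \<in> A \<Longrightarrow> cls s n \<in> carrier (Loc A f)"
  by (auto simp: Loc_simps)

lemma carrierE: assumes "Q \<in> carrier (Loc A f)" obtains s n where "s \<in> A" "Q = cls s n"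
  using assms by (auto simp: Loc_simps)

lemma cring_Loc: "cring (Loc A f)"
proof (rule cringI)
  note AC = A_closed A_pow fA
  show "abelian_group (Loc A f)"
  proof (rule abelian_groupI)
    fix x y assume "x \<in> carrier (Loc A f)" "y \<in> carrier (Loc A f)"
    then show "x \<oplus>\<^bsub>Loc A f\<^esub> y \<in> carrier (Loc A f)"
      by (auto elim!: carrierE simp: add_cls AC intro!: cls_in)
  next
    show "\<zero>\<^bsub>Loc A f\<^esub> \<in> carrier (Loc A f)" by (auto simp: Loc_simps AC intro!: cls_in)
  next
    fix x y z assume "x \<in> carrier (Loc A f)" "y \<in> carrier (Loc A f)" "z \<in> carrier (Loc A f)"
    then show "x \<oplus>\<^bsub>Loc A f\<^esub> y \<oplus>\<^bsub>Loc A f\<^esub> z = x \<oplus>\<^bsub>Loc A f\<^esub> (y \<oplus>\<^bsub>Loc A f\<^esub> z)"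
      apply - apply (elim carrierE) apply (simp add: add_cls AC) apply (rule cls_eqI) apply (simp_all add: AC) apply (simp add: algebra_simps power_add) done
  next
    fix x y assume "x \<in> carrier (Loc A f)" "y \<in> carrier (Loc A f)"
    then show "x \<oplus>\<^bsub>Loc A f\<^esub> y = y \<oplus>\<^bsub>Loc A f\<^esub> x"
      apply - apply (elim carrierE) apply (simp add: add_cls AC) apply (rule cls_eqI) apply (simp_all add: AC) apply (simp add: algebra_simps power_add) done
  next
    fix x assume "x \<in> carrier (Loc A f)"
    then show "\<zero>\<^bsub>Loc A f\<^esub> \<oplus>\<^bsub>Loc A f\<^esub> x = x"
      by (auto elim!: carrierE simp: Loc_simps add_cls AC intro!: cls_eqI)
  next
    fix x assume "x \<in> carrier (Loc A f)"
    then obtain s n where s: "s \<in> A" "x = cls s n" by (rule carrierE)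
    show "\<exists>y\<in>carrier (Loc A f). y \<oplus>\<^bsub>Loc A f\<^esub> x = \<zero>\<^bsub>Loc A f\<^esub>"
      apply (rule bexI[of _ "cls (-s) n"]) apply (simp add: Loc_simps add_cls AC s)
      apply (rule cls_eqI) apply (simp_all add: AC s cls_in) done
  qed
  show "comm_monoid (Loc A f)"
  proof (rule comm_monoidI)
    fix x y assume "x \<in> carrier (Loc A f)" "y \<in> carrier (Loc A f)"
    then show "x \<otimes>\<^bsub>Loc A f\<^esub> y \<in> carrier (Loc A f)"
      by (auto elim!: carrierE simp: mult_cls AC intro!: cls_in)
  next
    show "\<one>\<^bsub>Loc A f\<^esub> \<in> carrier (Loc A f)" by (auto simp: Loc_simps AC intro!: cls_in)
  next
    fix x y z assume "x \<in> carrier (Loc A f)" "y \<in> carrier (Loc A f)" "z \<in> carrier (Loc A f)"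
    then show "x \<otimes>\<^bsub>Loc A f\<^esub> y \<otimes>\<^bsub>Loc A f\<^esub> z = x \<otimes>\<^bsub>Loc A f\<^esub> (y \<otimes>\<^bsub>Loc A f\<^esub> z)"
      apply - apply (elim carrierE) apply (simp add: mult_cls AC) apply (rule cls_eqI) apply (simp_all add: AC) apply (simp add: algebra_simps power_add) done
  next
    fix x assume "x \<in> carrier (Loc A f)"
    then show "\<one>\<^bsub>Loc A f\<^esub> \<otimes>\<^bsub>Loc A f\<^esub> x = x"
      by (auto elim!: carrierE simp: Loc_simps mult_cls AC intro!: cls_eqI)
  next
    fix x y assume "x \<in> carrier (Loc A f)" "y \<in> carrier (Loc A f)"
    then show "x \<otimes>\<^bsub>Loc A f\<^esub> y = y \<otimes>\<^bsub>Loc A f\<^esub> x"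
      apply - apply (elim carrierE) apply (simp add: mult_cls AC) apply (rule cls_eqI) apply (simp_all add: AC) apply (simp add: algebra_simps power_add) done
  qed
next
  note AC = A_closed A_pow fA
  fix x y z assume "x \<in> carrier (Loc A f)" "y \<in> carrier (Loc A f)" "z \<in> carrier (Loc A f)"
  then show "(x \<oplus>\<^bsub>Loc A f\<^esub> y) \<otimes>\<^bsub>Loc A f\<^esub> z = x \<otimes>\<^bsub>Loc A f\<^esub> z \<oplus>\<^bsub>Loc A f\<^esub> y \<otimes>\<^bsub>Loc A f\<^esub> z"
    apply - apply (elim carrierE) apply (simp add: mult_cls add_cls AC) apply (rule cls_eqI) apply (simp_all add: AC) apply (simp add: algebra_simps power_add) done
qed

end

lemma ev_closed: assumes "subring_set A" "set p \<subseteq> A" "y \<in> A" shows "ev p y \<in> A"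
proof -
  interpret locs A 1 using assms(1) by unfold_locales (auto simp: subring_set_def)
  show ?thesis using assms(2,3) by (induct p) (auto intro!: A_closed A_pow)
qed

context locs begin

lemma pow_cls: "s \<in> A \<Longrightarrow> cls s 0 [^]\<^bsub>Loc A f\<^esub> (n::nat) = cls (s ^ n) 0"
  by (induct n) (simp_all add: Loc_simps mult_cls A_pow mult.commute)

lemma zero_cls_iff: "s \<in> A \<Longrightarrow> cls s n = \<zero>\<^bsub>Loc A f\<^esub> \<longleftrightarrow> (\<exists>l. f^l * s = 0)"
  by (simp add: Loc_simps cls_eq_iff A_closed loc_rel_def)

lemma minus_cls: assumes "s \<in> A" shows "\<ominus>\<^bsub>Loc A f\<^esub> cls s n = cls (-s) n"
proof -
  interpret cring "Loc A f" by (rule cring_Loc)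
  show ?thesis
    apply (rule add.inv_equality)
    apply (simp add: add_cls assms A_closed Loc_simps)
    apply (rule cls_eqI)
    using assms by (simp_all add: A_closed cls_in)
qed

lemma subring_Loc: assumes B: "subring_set B" "B \<subseteq> A" "f \<in> B"
  shows "subring {cls b n | b n. b \<in> B} (Loc A f)"
proof -
  interpret cring "Loc A f" by (rule cring_Loc)
  have BC: "0 \<in> B" "1 \<in> B" "x \<in> B \<Longrightarrow> y \<in> B \<Longrightarrow> x + y \<in> B"
    "x \<in> B \<Longrightarrow> - x \<in> B" "x \<in> B \<Longrightarrow> y \<in> B \<Longrightarrow> x * y \<in> B" for x y
    using B(1) unfolding subring_set_def by auto
  have BP: "x \<in> B \<Longrightarrow> x ^ n \<in> B" for x n by (induct n) (simp_all add: BC)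
  have BA: "x \<in> B \<Longrightarrow> x \<in> A" for x using B(2) by auto
  show ?thesis
  proof (rule subringI)
    show "{cls b n | b n. b \<in> B} \<subseteq> carrier (Loc A f)" using BA by (auto intro!: cls_in)
    show "\<one>\<^bsub>Loc A f\<^esub> \<in> {cls b n | b n. b \<in> B}" unfolding Loc_simps using BC(2) by blast
    show "\<ominus>\<^bsub>Loc A f\<^esub> h \<in> {cls b n | b n. b \<in> B}" if hh: "h \<in> {cls b n | b n. b \<in> B}" for h
    proof -
      obtain b n where bn: "b \<in> B" "h = cls b n" using hh by auto
      then have "\<ominus>\<^bsub>Loc A f\<^esub> h = cls (-b) n" by (simp add: minus_cls BA)
      then show ?thesis using BC(4)[OF bn(1)] by blast
    qed
    show "h1 \<otimes>\<^bsub>Loc A f\<^esub> h2 \<in> {cls b n | b n. b \<in> B}" if hh: "h1 \<in> {cls b n | b n. b \<in> B}" "h2 \<in> {cls b n | b n. b \<in> B}" for h1 h2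
    proof -
      obtain b n b' n' where bn: "b \<in> B" "h1 = cls b n" "b' \<in> B" "h2 = cls b' n'" using hh by auto
      then have "h1 \<otimes>\<^bsub>Loc A f\<^esub> h2 = cls (b * b') (n + n')" by (simp add: mult_cls BA)
      then show ?thesis using BC(5)[OF bn(1) bn(3)] by blast
    qed
    show "h1 \<oplus>\<^bsub>Loc A f\<^esub> h2 \<in> {cls b n | b n. b \<in> B}" if hh: "h1 \<in> {cls b n | b n. b \<in> B}" "h2 \<in> {cls b n | b n. b \<in> B}" for h1 h2
    proof -
      obtain b n b' n' where bn: "b \<in> B" "h1 = cls b n" "b' \<in> B" "h2 = cls b' n'" using hh by auto
      then have "h1 \<oplus>\<^bsub>Loc A f\<^esub> h2 = cls (b * f^n' + b' * f^n) (n + n')" by (simp add: add_cls BA)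
      moreover have "b * f^n' + b' * f^n \<in> B" using bn B(3) by (intro BC BP)
      ultimately show ?thesis by blast
    qed
  qed
qed

lemma eval_Loc: assumes B: "subring_set B" "B \<subseteq> A" "f \<in> B" and y: "y \<in> A"
  shows "set p \<subseteq> {cls b n | b n. b \<in> B} \<Longrightarrow> \<exists>bs M. length bs = length p \<and> set bs \<subseteq> B \<and>
     list_all2 (\<lambda>c b. c = cls b M) p bs \<and> ring.eval (Loc A f) p (cls y 0) = cls (ev bs y) M"
proof (induct p)
  interpret cring "Loc A f" by (rule cring_Loc)
  case Nil
  then show ?case by (intro exI[of _ "[]"] exI[of _ 0]) (simp add: Loc_simps)
next
  interpret cring "Loc A f" by (rule cring_Loc)
  have BC: "0 \<in> B" "1 \<in> B" "x \<in> B \<Longrightarrow> y \<in> B \<Longrightarrow> x + y \<in> B"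
    "x \<in> B \<Longrightarrow> - x \<in> B" "x \<in> B \<Longrightarrow> y \<in> B \<Longrightarrow> x * y \<in> B" for x y
    using B(1) unfolding subring_set_def by auto
  have BP: "x \<in> B \<Longrightarrow> x ^ n \<in> B" for x n by (induct n) (simp_all add: BC)
  case (Cons c p)
  then obtain bs M where IH: "length bs = length p" "set bs \<subseteq> B"
     "list_all2 (\<lambda>c b. c = cls b M) p bs" "eval p (cls y 0) = cls (ev bs y) M" by auto
  from Cons obtain b n where b: "b \<in> B" "c = cls b n" by auto
  have bA: "b \<in> A" using b B(2) by auto
  have bsA: "set bs \<subseteq> A" using IH(2) B(2) by auto
  have evA: "ev bs y \<in> A" by (rule ev_closed[OF sub bsA y])
  let ?bs = "(b * f^M) # map (\<lambda>t. t * f^n) bs"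
  show ?case
  proof (intro exI[of _ ?bs] exI[of _ "n + M"] conjI)
    show "length ?bs = length (c # p)" using IH by simp
    show "set ?bs \<subseteq> B" using IH(2) b B(3) by (auto intro!: BC BP)
    have "list_all2 (\<lambda>c b. c = cls b (n + M)) p (map (\<lambda>t. t * f^n) bs)"
      unfolding list_all2_conv_all_nth
    proof (intro conjI allI impI)
      show "length p = length (map (\<lambda>t. t * f ^ n) bs)" using IH(1) by simp
      fix i assume i: "i < length p"
      then have c: "p ! i = cls (bs ! i) M" using IH(3) by (simp add: list_all2_conv_all_nth)
      have tA: "bs ! i \<in> A" using bsA i IH(1) by auto
      show "p ! i = cls (map (\<lambda>t. t * f ^ n) bs ! i) (n + M)" unfolding c using i IH(1)
        by simp (rule cls_eqI, auto intro!: A_closed A_pow fA tA simp: power_add mult.commute)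
    qed
    moreover have "c = cls (b * f^M) (n + M)" unfolding b(2)
        by (rule cls_eqI) (auto intro!: A_closed A_pow fA bA simp: power_add mult.commute)
    ultimately show "list_all2 (\<lambda>c b. c = cls b (n + M)) (c # p) ?bs"
      by simp
    have "eval (c # p) (cls y 0) = c \<otimes>\<^bsub>Loc A f\<^esub> cls y 0 [^]\<^bsub>Loc A f\<^esub> length p \<oplus>\<^bsub>Loc A f\<^esub> cls (ev bs y) M"
      using IH by simp
    also have "\<dots> = cls (b * y ^ length p * f ^ M + ev bs y * f ^ n) (n + M)"
      using b bA y evA by (simp add: pow_cls mult_cls add_cls A_pow A_closed)
    also have "\<dots> = cls (ev ?bs y) (n + M)"
      using IH(1) by (simp add: ev_map_mult algebra_simps)
    finally show "eval (c # p) (cls y 0) = cls (ev ?bs y) (n + M)" .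
  qed
qed

end

lemma nsm_0[simp]: "nsm 0 g = 0" by (simp add: nsm_def)
lemma nsm_Suc[simp]: "nsm (Suc n) g = g + nsm n g" by (simp add: nsm_def)
lemma nsm_add: "nsm (a + b) g = nsm a g + nsm b g"
  by (induct a) (simp_all add: add.assoc)
lemma nsm_mult: "nsm (a * b) g = nsm a (nsm b g)"
  by (induct a) (simp_all add: nsm_add)
lemma nsm_neg: "nsm n (- g) = - nsm n g"
  by (induct n) (simp_all add: add.commute)
lemma nsm_zero[simp]: "nsm n 0 = (0::'g::ab_group_add)"
  by (induct n) simp_all

definition comp :: "('g::ab_group_add \<Rightarrow> 'a::comm_ring_1 set) \<Rightarrow> 'g \<Rightarrow> 'a \<Rightarrow> 'a" where
  "comp gr i s = (THE c. finite {i. c i \<noteq> 0} \<and> (\<forall>i. c i \<in> gr i) \<and> s = (\<Sum>i\<in>{i. c i \<noteq> 0}. c i)) i"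

locale grs =
  fixes gr :: "'g::ab_group_add \<Rightarrow> 'a::comm_ring_1 set"
  assumes graded: "graded_ring gr"
begin

lemma gr_zero[simp]: "0 \<in> gr i" and gr_add: "x \<in> gr i \<Longrightarrow> y \<in> gr i \<Longrightarrow> x + y \<in> gr i"
  and gr_neg: "x \<in> gr i \<Longrightarrow> - x \<in> gr i"
  and gr_mult: "x \<in> gr i \<Longrightarrow> y \<in> gr j \<Longrightarrow> x * y \<in> gr (i + j)"
  using graded unfolding graded_ring_def by auto

lemma gr_sum: "(\<And>x. x \<in> Y \<Longrightarrow> g x \<in> gr i) \<Longrightarrow> sum g Y \<in> gr i"
  by (induct Y rule: infinite_finite_induct) (auto intro: gr_add)

abbreviation "P c s \<equiv> finite {i. c i \<noteq> 0} \<and> (\<forall>i. c i \<in> gr i) \<and> s = (\<Sum>i\<in>{i. c i \<noteq> 0}. c i)"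

lemma ex1: "\<exists>!c. P c s" using graded unfolding graded_ring_def by blast

lemma comp_prop: "P (\<lambda>i. comp gr i s) s"
  unfolding comp_def using theI'[OF ex1[of s]] by simp

lemma comp_in: "comp gr i s \<in> gr i" using comp_prop by blast

lemma comp_unique: assumes "finite F" "\<And>i. c i \<in> gr i" "\<And>i. i \<notin> F \<Longrightarrow> c i = 0" "s = sum c F"
  shows "comp gr i s = c i"
proof -
  have sub: "{i. c i \<noteq> 0} \<subseteq> F" using assms(3) by auto
  have "P c s"
  proof (intro conjI allI)
    show "finite {i. c i \<noteq> 0}" using finite_subset[OF sub assms(1)] .
    show "c i \<in> gr i" for i by (rule assms(2))
    show "s = (\<Sum>i\<in>{i. c i \<noteq> 0}. c i)" using assms(4) sum.mono_neutral_right[OF assms(1) sub] by auto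
  qed
  then have "(THE c. P c s) = c" using ex1[of s] by (rule the1_equality[rotated])
  then show ?thesis unfolding comp_def by simp
qed

lemma comp_rep: assumes "finite F" "{i. comp gr i s \<noteq> 0} \<subseteq> F" shows "s = (\<Sum>i\<in>F. comp gr i s)"
proof -
  have "sum (\<lambda>i. comp gr i s) F = sum (\<lambda>i. comp gr i s) {i. comp gr i s \<noteq> 0}"
    by (rule sum.mono_neutral_right[OF assms]) auto
  then show ?thesis using comp_prop[of s] by simp
qed

lemma comp_homog: assumes "s \<in> gr j" shows "comp gr i s = (if i = j then s else 0)"
  by (rule comp_unique[of "{j}"]) (auto simp: assms)

lemma comp_zero[simp]: "comp gr i 0 = 0"
  using comp_homog[OF gr_zero[of i]] by simp

lemma comp_add: "comp gr i (s + t) = comp gr i s + comp gr i t"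
proof -
  let ?F = "{i. comp gr i s \<noteq> 0} \<union> {i. comp gr i t \<noteq> 0}"
  have fin: "finite ?F" using comp_prop[of s] comp_prop[of t] by auto
  show ?thesis
  proof (rule comp_unique[OF fin])
    show "comp gr i s + comp gr i t \<in> gr i" for i by (intro gr_add comp_in)
    show "i \<notin> ?F \<Longrightarrow> comp gr i s + comp gr i t = 0" for i by auto
    show "s + t = (\<Sum>i\<in>?F. comp gr i s + comp gr i t)"
      using comp_rep[OF fin, of s] comp_rep[OF fin, of t] by (auto simp: sum.distrib)
  qed
qed

lemma comp_sum: "comp gr i (\<Sum>x\<in>Y. g x) = (\<Sum>x\<in>Y. comp gr i (g x))"
  by (induct Y rule: infinite_finite_induct) (auto simp: comp_add)

lemma comp_mult_homog: assumes x: "x \<in> gr j" shows "comp gr k (x * y) = x * comp gr (k - j) y"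
proof -
  let ?S = "{i. comp gr i y \<noteq> 0}"
  let ?F = "(\<lambda>i. i + j) ` ?S"
  have finS: "finite ?S" using comp_prop[of y] by auto
  then have fin: "finite ?F" by simp
  show ?thesis
  proof (rule comp_unique[OF fin])
    show "x * comp gr (i - j) y \<in> gr i" for i
      using gr_mult[OF x comp_in[of "i - j" y]] by simp
    show "i \<notin> ?F \<Longrightarrow> x * comp gr (i - j) y = 0" for i
      by (metis (mono_tags, lifting) diff_add_cancel image_eqI mem_Collect_eq mult_zero_right)
    have "x * y = x * (\<Sum>i\<in>?S. comp gr i y)" using comp_rep[OF finS, of y] by simp
    also have "\<dots> = (\<Sum>i\<in>?S. x * comp gr ((i + j) - j) y)" by (simp add: sum_distrib_left)
    also have "\<dots> = (\<Sum>i\<in>?F. x * comp gr (i - j) y)"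
      by (subst sum.reindex) (auto simp: inj_on_def)
    finally show "x * y = (\<Sum>i\<in>?F. x * comp gr (i - j) y)" .
  qed
qed

lemma one_gr0: "1 \<in> gr 0"
proof -
  let ?c = "comp gr 0 1"
  have h: "x = x * ?c" if "x \<in> gr i" for x i
  proof -
    have "comp gr i (x * 1) = x * ?c" using comp_mult_homog[OF that, of i 1] by simp
    moreover have "comp gr i (x * 1) = x" using comp_homog[of x i i] that by simp
    ultimately show ?thesis by simp
  qed
  let ?S = "{i. comp gr i 1 \<noteq> 0}"
  have finS: "finite ?S" using comp_prop[of 1] by auto
  have "1 = (\<Sum>i\<in>?S. comp gr i 1)" using comp_rep[OF finS] by simp
  also have "\<dots> = (\<Sum>i\<in>?S. comp gr i 1 * ?c)" using h[OF comp_in] by (intro sum.cong) auto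
  also have "\<dots> = (\<Sum>i\<in>?S. comp gr i 1) * ?c" by (simp add: sum_distrib_right)
  also have "\<dots> = ?c" using comp_rep[OF finS, of 1] by simp
  finally show ?thesis using comp_in[of 0 1] by simp
qed

lemma gr_pow: "x \<in> gr i \<Longrightarrow> x ^ n \<in> gr (nsm n i)"
proof (induct n)
  case 0
  show ?case using one_gr0 by simp
next
  case (Suc n)
  then show ?case using gr_mult[OF Suc(2) Suc(1)[OF Suc(2)]] by simp
qed

lemma subring_gr0: "subring_set (gr 0)"
  unfolding subring_set_def using one_gr0 gr_add gr_neg gr_mult[of _ 0 _ 0] by auto

lemma comp_eq0: "(\<And>i. comp gr i s = 0) \<Longrightarrow> s = 0"
  using comp_prop[of s] by simp

end

lemma subring_sring: assumes "subring_set A" "subring_set B" "B \<subseteq> A" shows "subring B (sring A)"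
proof -
  interpret cring "sring A" by (rule cring_sring[OF assms(1)])
  show ?thesis
    apply (rule subringI)
    using assms unfolding subring_set_def by (auto simp: sring_minus[OF assms(1)] subsetD)
qed

lemma inj_mult: "0 < (m::nat) \<Longrightarrow> inj_on (\<lambda>i. m*i) S"
  by (simp add: inj_on_def)

lemma sum_reidx1: fixes b :: "nat \<Rightarrow> 'a::comm_ring_1"
  assumes m: "0 < m" and b: "\<And>j. \<not> m dvd j \<Longrightarrow> b j = 0"
  shows "(\<Sum>j<N. b j * v^j) = (\<Sum>i<N. (if m*i < N then b (m*i) else 0) * v^(m*i))"
proof -
  have "(\<Sum>j<N. b j * v^j) = (\<Sum>j\<in>(\<lambda>i. m*i) ` {i. m*i<N}. b j * v^j)"
  proof (rule sum.mono_neutral_right)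
    show "\<forall>j\<in>{..<N} - (\<lambda>i. m*i) ` {i. m*i<N}. b j * v^j = 0"
    proof
      fix j assume j: "j \<in> {..<N} - (\<lambda>i. m*i) ` {i. m*i<N}"
      show "b j * v^j = 0"
      proof (cases "m dvd j")
        case True
        then obtain k where "j = m * k" by (auto simp: dvd_def)
        then show ?thesis using j by auto
      qed (simp add: b)
    qed
  qed auto
  also have "\<dots> = (\<Sum>i\<in>{i. m*i<N}. b (m*i) * v^(m*i))"
    by (simp add: sum.reindex[OF inj_mult[OF m]])
  also have "\<dots> = (\<Sum>i<N. (if m*i < N then b (m*i) else 0) * v^(m*i))"
  proof (rule sum.mono_neutral_cong_left)
    show "{i. m*i<N} \<subseteq> {..<N}"
    proof
      fix i assume "i \<in> {i. m*i<N}"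
      then have 1: "m*i < N" by simp
      have 2: "i \<le> m*i" using m by simp
      show "i \<in> {..<N}" using le_less_trans[OF 2 1] by simp
    qed
  qed simp_all
  finally show ?thesis .
qed

lemma sum_reidx2: fixes q :: "nat \<Rightarrow> 'a::comm_ring_1" assumes m: "0 < m"
  shows "(\<Sum>i<L. q i * v^(m*i)) = (\<Sum>j<m*L. (if m dvd j \<and> j div m < L then q (j div m) else 0) * v^j)"
proof -
  have "(\<Sum>j<m*L. (if m dvd j \<and> j div m < L then q (j div m) else 0) * v^j) =
        (\<Sum>j\<in>(\<lambda>i. m*i) ` {..<L}. (if m dvd j \<and> j div m < L then q (j div m) else 0) * v^j)"
  proof (rule sum.mono_neutral_right)
    show "(\<lambda>i. m*i) ` {..<L} \<subseteq> {..<m*L}" using m by auto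
  qed (auto simp: dvd_def)
  also have "\<dots> = (\<Sum>i<L. q i * v^(m*i))"
    using m by (simp add: sum.reindex[OF inj_mult[OF m]])
  finally show ?thesis by simp
qed

theorem lemma4p2:
  fixes gr :: "'g::ab_group_add \<Rightarrow> 'a::comm_ring_1 set"
    and R :: "'a set"
  assumes torsion: "\<forall>g::'g. \<exists>n>0. nsm n g = 0"
    and graded: "graded_ring gr"
    and subR: "graded_subring gr R"
    and polyS: "\<exists>v i. v \<in> gr i \<and> poly_ring_over (sring UNIV) R v"
    and Hsub: "0 \<in> {i. R \<inter> gr i \<noteq> {0}} \<and>
               (\<forall>i\<in>{i. R \<inter> gr i \<noteq> {0}}. \<forall>j\<in>{i. R \<inter> gr i \<noteq> {0}}.
                   i + j \<in> {i. R \<inter> gr i \<noteq> {0}} \<and> - i \<in> {i. R \<inter> gr i \<noteq> {0}})"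
  shows "(\<exists>w. poly_ring_over (sring (gr 0)) (R \<inter> gr 0) w) \<or>
         (\<exists>e. e \<in> {i. R \<inter> gr i \<noteq> {0}} - {0} \<and>
              (\<forall>r \<in> R \<inter> gr e - {0}. is_poly_ring1 (Loc (gr 0) (r ^ gorder e))))"
proof -
  interpret grs gr by unfold_locales (rule graded)
  define H where "H = {i. R \<inter> gr i \<noteq> {0}}"
  have H0: "0 \<in> H" and Hadd: "\<And>i j. i \<in> H \<Longrightarrow> j \<in> H \<Longrightarrow> i + j \<in> H"
    and Hneg: "\<And>i. i \<in> H \<Longrightarrow> - i \<in> H"
    using Hsub unfolding H_def by auto
  have Hnsm: "i \<in> H \<Longrightarrow> nsm n i \<in> H" for i n
    by (induct n) (simp_all add: H0 Hadd)
  have subRs: "subring_set R" using subR unfolding graded_subring_def by auto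
  have RC: "0 \<in> R" "1 \<in> R" "x \<in> R \<Longrightarrow> y \<in> R \<Longrightarrow> x + y \<in> R" "x \<in> R \<Longrightarrow> - x \<in> R"
    "x \<in> R \<Longrightarrow> y \<in> R \<Longrightarrow> x * y \<in> R" for x y
    using subRs unfolding subring_set_def by auto
  have RP: "x \<in> R \<Longrightarrow> x ^ n \<in> R" for x n by (induct n) (simp_all add: RC)
  have compR: "comp gr i r \<in> R" if r: "r \<in> R" for r i
  proof -
    obtain c where c: "finite {i. c i \<noteq> 0}" "\<forall>i. c i \<in> R \<inter> gr i" "r = (\<Sum>i\<in>{i. c i \<noteq> 0}. c i)"
      using subR r unfolding graded_subring_def by blast
    have "comp gr i r = c i" by (rule comp_unique[OF c(1)]) (use c in auto)
    then show ?thesis using c(2) by auto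
  qed
  have compH: "comp gr i r = 0" if "r \<in> R" "i \<notin> H" for r i
  proof -
    have "comp gr i r \<in> R \<inter> gr i" "R \<inter> gr i = {0}" using that compR comp_in unfolding H_def by auto
    then show ?thesis by auto
  qed
  obtain v d where v: "v \<in> gr d" and pr: "poly_ring_over (sring UNIV) R v" using polyS by auto
  have subU: "subring_set (UNIV :: 'a set)" by (simp add: subring_set_def)
  have P1: "\<exists>N a. (\<forall>i. a i \<in> R) \<and> s = (\<Sum>i<N. a i * v^i)" for s
  proof -
    have "\<exists>p. set p \<subseteq> R \<and> s = ring.eval (sring UNIV) p v"
      using pr unfolding poly_ring_over_def by simp
    then obtain p where p: "set p \<subseteq> R" "s = ring.eval (sring UNIV) p v" by blast
    have pR: "i < length p \<Longrightarrow> rev p ! i \<in> R" for i using p(1)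
      by (metis length_rev nth_mem set_rev subsetD)
    have "s = (\<Sum>i<length p. (if i < length p then rev p ! i else 0) * v^i)"
      using p(2) by (simp add: eval_sring[OF subU] ev_sum)
    then show ?thesis using pR RC(1)
      by (intro exI[of _ "length p"] exI[of _ "\<lambda>i. if i < length p then rev p ! i else 0"]) auto
  qed
  have P2: "\<forall>i<N. a i = 0" if a: "\<forall>i<N. a i \<in> R" and z: "(\<Sum>i<N. a i * v^i) = 0" for N a
  proof -
    let ?p = "rev (map a [0..<N])"
    have "set ?p \<subseteq> R" using a by auto
    moreover have "ring.eval (sring UNIV) ?p v = \<zero>\<^bsub>sring UNIV\<^esub>"
      using z by (simp add: eval_sring[OF subU] ev_list)
    ultimately have "\<forall>x\<in>set ?p. x = \<zero>\<^bsub>sring UNIV\<^esub>" using pr unfolding poly_ring_over_def by blast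
    then show ?thesis by auto
  qed
  obtain n0 where n0: "n0 > 0" "nsm n0 d = 0" using torsion by auto
  define m where "m = (LEAST m. 0 < m \<and> nsm m d \<in> H)"
  have mH: "0 < m \<and> nsm m d \<in> H" unfolding m_def by (rule LeastI[of _ n0]) (simp add: n0 H0)
  hence m0: "0 < m" and mdH: "nsm m d \<in> H" by auto
  have mmin: "nsm j d \<notin> H" if "0 < j" "j < m" for j
    using not_less_Least[of j "\<lambda>m. 0 < m \<and> nsm m d \<in> H"] that unfolding m_def by auto
  have mdvd: "m dvd j" if jH: "nsm j d \<in> H" for j
  proof (rule ccontr)
    assume nd: "\<not> m dvd j"
    have "j = (j div m) * m + j mod m" by simp
    then have "nsm j d = nsm (j div m) (nsm m d) + nsm (j mod m) d" by (metis nsm_add nsm_mult)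
    then have "nsm (j mod m) d = nsm j d + - nsm (j div m) (nsm m d)" by (simp add: algebra_simps)
    also have "\<dots> \<in> H" by (rule Hadd[OF jH Hneg[OF Hnsm[OF mdH]]])
    finally have "nsm (j mod m) d \<in> H" .
    moreover have "0 < j mod m" using nd by (simp add: mod_greater_zero_iff_not_dvd)
    moreover have "j mod m < m" using m0 by simp
    ultimately show False using mmin by blast
  qed
  have vpow: "v^j \<in> gr (nsm j d)" for j using gr_pow[OF v] .
  have decomp: "\<exists>N c. (\<forall>i. c i \<in> R \<and> c i \<in> gr (- nsm (m*i) d)) \<and> s = (\<Sum>i<N. c i * v^(m*i))"
    if s: "s \<in> gr 0" for s
  proof -
    obtain N a where a: "\<forall>i. a i \<in> R" "s = (\<Sum>i<N. a i * v^i)" using P1 by blast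
    define b where "b j = comp gr (- nsm j d) (a j)" for j
    have bR: "b j \<in> R" for j using compR a(1) unfolding b_def by auto
    have bgr: "b j \<in> gr (- nsm j d)" for j unfolding b_def by (rule comp_in)
    have b0: "b j = 0" if "\<not> m dvd j" for j
    proof -
      have "- nsm j d \<notin> H" using mdvd Hneg that by force
      then show ?thesis unfolding b_def using compH a(1) by auto
    qed
    have "s = comp gr 0 s" using comp_homog[OF s] by simp
    also have "\<dots> = (\<Sum>j<N. comp gr 0 (v^j * a j))" unfolding a(2) by (simp add: comp_sum mult.commute)
    also have "\<dots> = (\<Sum>j<N. b j * v^j)" unfolding b_def using comp_mult_homog[OF vpow] by (simp add: mult.commute)
    also have "\<dots> = (\<Sum>i<N. (if m*i<N then b (m*i) else 0) * v^(m*i))" by (rule sum_reidx1[OF m0 b0])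
    finally show ?thesis using bR bgr RC(1)
      by (intro exI[of _ N] exI[of _ "\<lambda>i. if m*i<N then b (m*i) else 0"]) auto
  qed
  have P2m: "\<forall>i<L. q i = 0" if q: "\<forall>i<L. q i \<in> R" and z: "(\<Sum>i<L. q i * v^(m*i)) = 0" for L q
  proof -
    let ?a = "\<lambda>j. if m dvd j \<and> j div m < L then q (j div m) else 0"
    have z1: "(\<Sum>j<m*L. ?a j * v^j) = 0" using z sum_reidx2[OF m0, where L=L and q=q and v=v] by simp
    have a1: "\<forall>j<m*L. ?a j \<in> R" using q RC(1) by auto
    have all0: "\<forall>j<m*L. ?a j = 0" by (rule P2[OF a1 z1])
    show ?thesis
    proof (intro allI impI)
      fix i assume i: "i < L"
      then have "m*i < m*L" using m0 by simp
      then have "?a (m*i) = 0" using all0 by blast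
      then show "q i = 0" using m0 i by simp
    qed
  qed
  have sub0: "subring_set (R \<inter> gr 0)" using subRs subring_gr0 unfolding subring_set_def by auto
  show ?thesis
  proof (cases "nsm m d = 0")
    case True
    have deg0: "- nsm (m*i) d = 0" for i by (simp add: mult.commute[of m] nsm_mult True)
    let ?w = "v^m"
    have w0: "?w \<in> gr 0" using vpow[of m] True by simp
    have "poly_ring_over (sring (gr 0)) (R \<inter> gr 0) ?w"
      unfolding poly_ring_over_def
    proof (intro conjI ballI allI impI)
      show "cring (sring (gr 0))" by (rule cring_sring[OF subring_gr0])
      show "subring (R \<inter> gr 0) (sring (gr 0))" by (rule subring_sring[OF subring_gr0 sub0]) auto
      show "?w \<in> carrier (sring (gr 0))" using w0 by simp
    next
      fix c assume "c \<in> carrier (sring (gr 0))"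
      then have "c \<in> gr 0" by simp
      then obtain N cc where cc: "\<forall>i. cc i \<in> R \<and> cc i \<in> gr (- nsm (m*i) d)" "c = (\<Sum>i<N. cc i * v^(m*i))"
        using decomp by blast
      let ?p = "rev (map cc [0..<N])"
      have "c = ring.eval (sring (gr 0)) ?p ?w"
        using cc(2) by (simp add: eval_sring[OF subring_gr0] ev_list power_mult)
      moreover have "set ?p \<subseteq> R \<inter> gr 0" using cc(1) deg0 by auto
      ultimately show "\<exists>p. set p \<subseteq> R \<inter> gr 0 \<and> c = ring.eval (sring (gr 0)) p ?w" by blast
    next
      fix p a assume p: "set p \<subseteq> R \<inter> gr 0 \<and> ring.eval (sring (gr 0)) p ?w = \<zero>\<^bsub>sring (gr 0)\<^esub>"
        and a: "a \<in> set p"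
      have "(\<Sum>i<length p. rev p ! i * v^(m*i)) = 0"
        using p by (simp add: eval_sring[OF subring_gr0] ev_sum power_mult)
      moreover have "\<forall>i<length p. rev p ! i \<in> R" using p
        by (metis IntE length_rev nth_mem set_rev subsetD)
      ultimately have z: "\<forall>i<length p. rev p ! i = 0" using P2m by blast
      obtain i where "i < length p" "a = rev p ! i" using a by (metis in_set_conv_nth length_rev set_rev)
      then show "a = \<zero>\<^bsub>sring (gr 0)\<^esub>" using z by simp
    qed
    then show ?thesis by blast
  next
    case False
    define e where "e = - nsm m d"
    have eH: "e \<in> H" unfolding e_def using Hneg mdH by blast
    have e0: "e \<noteq> 0" using False unfolding e_def by simp
    have "\<forall>r\<in>R \<inter> gr e - {0}. is_poly_ring1 (Loc (gr 0) (r ^ gorder e))"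
    proof
      fix r assume r: "r \<in> R \<inter> gr e - {0}"
      define k where "k = gorder e"
      obtain n1 where n1: "n1 > 0" "nsm n1 e = 0" using torsion by auto
      have kk: "0 < k \<and> nsm k e = 0" unfolding k_def gorder_def by (rule LeastI[of _ n1]) (simp add: n1)
      hence k0: "0 < k" and ke: "nsm k e = 0" by auto
      define f where "f = r^k"
      have rR: "r \<in> R" and re: "r \<in> gr e" using r by auto
      have f0: "f \<in> gr 0" using gr_pow[OF re, of k] ke unfolding f_def by simp
      have fR: "f \<in> R" using RP rR unfolding f_def by simp
      interpret locs "gr 0" f by unfold_locales (rule subring_gr0, rule f0)
      define y where "y = r * v^m"
      have y0: "y \<in> gr 0" using gr_mult[OF re vpow[of m]] unfolding y_def e_def by simp
      have yv: "y^i = r^i * v^(m*i)" for i unfolding y_def by (simp add: power_mult_distrib power_mult)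
      have rk: "r^i * r^(i*(k-1)) = f^i" for i
      proof -
        have "i + i*(k-1) = k * i" using k0 by (cases k) auto
        then show ?thesis unfolding f_def by (metis power_add power_mult)
      qed
      let ?AL = "{cls b n | b n. b \<in> R \<inter> gr 0}"
      have "poly_ring_over (Loc (gr 0) f) ?AL (cls y 0)"
        unfolding poly_ring_over_def
      proof (intro conjI ballI allI impI)
        show "cring (Loc (gr 0) f)" by (rule cring_Loc)
        show "subring ?AL (Loc (gr 0) f)" by (rule subring_Loc) (use sub0 fR f0 in auto)
        show "cls y 0 \<in> carrier (Loc (gr 0) f)" by (rule cls_in[OF y0])
      next
        fix Q assume "Q \<in> carrier (Loc (gr 0) f)"
        then obtain s n where s: "s \<in> gr 0" "Q = cls s n" by (rule carrierE)
        obtain N c where c: "\<forall>i. c i \<in> R \<and> c i \<in> gr (- nsm (m*i) d)" "s = (\<Sum>i<N. c i * v^(m*i))"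
          using decomp[OF s(1)] by blast
        have cdeg: "c i * r^(i*(k-1)) \<in> gr 0" for i
        proof -
          have "- nsm (m*i) d = nsm i e" unfolding e_def by (simp add: mult.commute[of m] nsm_mult nsm_neg)
          then have "- nsm (m*i) d + nsm (i*(k-1)) e = nsm (i + i*(k-1)) e" by (simp add: nsm_add)
          also have "i + i*(k-1) = i * k" using k0 by (cases k) auto
          also have "nsm (i * k) e = 0" by (simp add: nsm_mult ke)
          finally have deq: "- nsm (m*i) d + nsm (i*(k-1)) e = 0" .
          have "c i * r^(i*(k-1)) \<in> gr (- nsm (m*i) d + nsm (i*(k-1)) e)"
            by (rule gr_mult[OF conjunct2[OF spec[OF c(1), of i]] gr_pow[OF re]])
          then show ?thesis unfolding deq .
        qed
        have cv: "c i * v^(m*i) \<in> gr 0" for i using gr_mult[OF conjunct2[OF spec[OF c(1), of i]] vpow[of "m*i"]] by simp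
        have sum0: "(\<Sum>i<N'. c i * v^(m*i)) \<in> gr 0" for N' by (rule gr_sum) (use cv in auto)
        have main: "\<exists>p. length p = N' \<and> set p \<subseteq> ?AL \<and>
            ring.eval (Loc (gr 0) f) p (cls y 0) = cls (\<Sum>i<N'. c i * v^(m*i)) n" for N'
        proof (induct N')
          case 0
          interpret L: cring "Loc (gr 0) f" by (rule cring_Loc)
          have "cls 0 0 = cls 0 n" by (rule cls_eqI) (simp_all add: A_closed)
          then show ?case by (intro exI[of _ "[]"]) (simp add: Loc_simps)
        next
          case (Suc N')
          interpret L: cring "Loc (gr 0) f" by (rule cring_Loc)
          obtain p where p: "length p = N'" "set p \<subseteq> ?AL"
            "ring.eval (Loc (gr 0) f) p (cls y 0) = cls (\<Sum>i<N'. c i * v^(m*i)) n" using Suc by blast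
          let ?a = "cls (c N' * r^(N'*(k-1))) (N' + n)"
          have "c N' * r^(N'*(k-1)) \<in> R \<inter> gr 0"
            using RC(5)[OF conjunct1[OF spec[OF c(1), of N']] RP[OF rR]] cdeg[of N'] by simp
          then have aA: "?a \<in> ?AL" by blast
          let ?S = "\<Sum>i<N'. c i * v^(m*i)"
          have "ring.eval (Loc (gr 0) f) (?a # p) (cls y 0) =
                ?a \<otimes>\<^bsub>Loc (gr 0) f\<^esub> (cls y 0 [^]\<^bsub>Loc (gr 0) f\<^esub> N') \<oplus>\<^bsub>Loc (gr 0) f\<^esub> cls ?S n"
            using p by simp
          also have "\<dots> = cls (c N' * r^(N'*(k-1)) * y^N' * f^n + ?S * f^(N'+n)) (N' + n + n)"
            using cdeg y0 sum0 fA by (simp add: pow_cls mult_cls add_cls A_pow A_closed)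
          also have "\<dots> = cls (?S + c N' * v^(m*N')) n"
          proof (rule cls_eqI)
            show "c N' * r^(N'*(k-1)) * y^N' * f^n + ?S * f^(N'+n) \<in> gr 0"
              using cdeg y0 sum0 fA by (simp add: A_pow A_closed)
            show "?S + c N' * v^(m*N') \<in> gr 0" using cv sum0 fA by (simp add: A_closed)
            have "c N' * r^(N'*(k-1)) * y^N' = c N' * v^(m*N') * f^N'"
              unfolding yv rk[of N', symmetric] by (simp add: algebra_simps)
            then show "(c N' * r^(N'*(k-1)) * y^N' * f^n + ?S * f^(N'+n)) * f^n = (?S + c N' * v^(m*N')) * f^(N'+n+n)"
              by (simp add: algebra_simps power_add)
          qed
          also have "\<dots> = cls (\<Sum>i<Suc N'. c i * v^(m*i)) n" by (simp add: add.commute)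
          finally show ?case using p aA by (intro exI[of _ "?a # p"]) auto
        qed
        show "\<exists>p. set p \<subseteq> ?AL \<and> Q = ring.eval (Loc (gr 0) f) p (cls y 0)"
        proof -
          obtain p where "set p \<subseteq> ?AL" "ring.eval (Loc (gr 0) f) p (cls y 0) = cls (\<Sum>i<N. c i * v^(m*i)) n"
            using main[of N] by blast
          then show ?thesis unfolding s(2) c(2) by blast
        qed
      next
        fix p a assume p: "set p \<subseteq> ?AL \<and> ring.eval (Loc (gr 0) f) p (cls y 0) = \<zero>\<^bsub>Loc (gr 0) f\<^esub>"
          and a: "a \<in> set p"
        obtain bs M where bs: "length bs = length p" "set bs \<subseteq> R \<inter> gr 0"
            "list_all2 (\<lambda>c b. c = cls b M) p bs" "ring.eval (Loc (gr 0) f) p (cls y 0) = cls (ev bs y) M"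
          using eval_Loc[OF sub0 _ _ y0, of p] fR f0 p by auto
        have evA: "ev bs y \<in> gr 0" by (rule ev_closed[OF subring_gr0 _ y0]) (use bs(2) in auto)
        have "cls (ev bs y) M = \<zero>\<^bsub>Loc (gr 0) f\<^esub>" using p bs(4) by simp
        then obtain l where l: "f^l * ev bs y = 0" using zero_cls_iff[OF evA] by auto
        let ?L = "length bs"
        have "(\<Sum>i<?L. (f^l * rev bs ! i * r^i) * v^(m*i)) = f^l * ev bs y"
          by (simp add: ev_sum sum_distrib_left yv algebra_simps)
        hence zz: "(\<Sum>i<?L. (f^l * rev bs ! i * r^i) * v^(m*i)) = 0" using l by simp
        have qq: "\<forall>i<?L. f^l * rev bs ! i * r^i \<in> R"
        proof (intro allI impI)
          fix i assume "i < ?L"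
          then have "rev bs ! i \<in> R" using bs(2) by (metis IntE length_rev nth_mem set_rev subsetD)
          then show "f^l * rev bs ! i * r^i \<in> R" using fR rR by (intro RC RP)
        qed
        have z: "\<forall>i<?L. f^l * rev bs ! i * r^i = 0"
          by (rule P2m[where q="\<lambda>i. f^l * rev bs ! i * r^i" and L="?L", OF qq zz])
        have kill: "\<exists>l'. f^l' * b = 0" if b: "b \<in> set bs" for b
        proof -
          obtain i where i: "i < ?L" "b = rev bs ! i" using b by (metis in_set_conv_nth length_rev set_rev)
          have "f^(l+i) * b = (f^l * rev bs ! i * r^i) * r^(i*(k-1))"
            unfolding i(2) power_add rk[of i, symmetric] by (simp add: algebra_simps)
          then show ?thesis using z i(1) by auto
        qed
        obtain j where j: "j < length p" "a = p ! j" using a by (metis in_set_conv_nth)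
        have aj: "a = cls (bs ! j) M" using bs(3) j by (simp add: list_all2_conv_all_nth)
        have bj: "bs ! j \<in> set bs" using j bs(1) by simp
        then have "bs ! j \<in> gr 0" using bs(2) by auto
        then show "a = \<zero>\<^bsub>Loc (gr 0) f\<^esub>" using aj kill[OF bj] zero_cls_iff by blast
      qed
      then show "is_poly_ring1 (Loc (gr 0) (r ^ gorder e))" unfolding is_poly_ring1_def f_def k_def by blast
    qed
    then show ?thesis using eH e0 unfolding H_def by blast
  qed
qed

end
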